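(* Let ${\bm\pi}^*$ be a probability vector on a finite set $\mathbb{A}$ with all entries positive and $\varepsilon=\min_a\pi^*_a$. Then for every probability vector ${\bm\pi}$ on $\mathbb{A}$ with all entries positive, \[ \|{\bm\pi}^*-{\bm\pi}\|_1\ge 2\varepsilon\sqrt{1-\exp\!\big(-D_{\mathrm{KL}}({\bm\pi}^*\|{\bm\pi})/\varepsilon\big)}. \]
   Context: (In the paper, ${\bm\pi}^*$ is the KL projection of the OMWU initialization onto the equilibrium set, which has full support.) *)

theory Defs
  imports "HOL-Analysis.Analysis"
begin

definition pos_prob_vec :: "'a set \<Rightarrow> ('a \<Rightarrow> real) \<Rightarrow> bool" where
  "pos_prob_vec A p \<longleftrightarrow> (\<forall>a\<in>A. p a > 0) \<and> (\<Sum>a\<in>A. p a) = 1"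

definition KL_div :: "'a set \<Rightarrow> ('a \<Rightarrow> real) \<Rightarrow> ('a \<Rightarrow> real) \<Rightarrow> real" where
  "KL_div A p q = (\<Sum>a\<in>A. p a * ln (p a / q a))"

definition l1_dist :: "'a set \<Rightarrow> ('a \<Rightarrow> real) \<Rightarrow> ('a \<Rightarrow> real) \<Rightarrow> real" where
  "l1_dist A p q = (\<Sum>a\<in>A. \<bar>p a - q a\<bar>)"

end

theory Submission
  imports Defs
begin

lemma lnK:
  fixes l c :: real
  assumes "0 \<le> l" "l \<le> 1" "c > -1"
  shows "l * ln (1+c) \<le> ln (1 + l*c)"
proof -
  have "(1 - l) * ln 1 + l * ln (1+c) \<le> ln ((1 - l) *\<^sub>R 1 + l *\<^sub>R (1+c))"
    by (rule concave_onD[OF ln_concave]) (use assms in auto)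
  moreover have "(1 - l) *\<^sub>R 1 + l *\<^sub>R (1+c) = 1 + l*c" by (simp add: algebra_simps)
  moreover have "1 - l + l * (1 + c) = 1 + l*c" by (simp add: algebra_simps)
  ultimately show ?thesis by simp
qed

lemma term_pos:
  fixes w p t e :: real
  assumes "e > 0" "w \<ge> e" "p > 0" "p \<le> w" "w - p \<le> t" "t < e" "t > 0"
  shows "w * ln (w / p) \<le> ((w - p) / t) * (- e * ln (1 - t / e))"
proof -
  define d where "d = w - p"
  have wpos: "w > 0" using assms by linarith
  have A: "(e / w) * ln (1 + (- d / e)) \<le> ln (1 + (e / w) * (- d / e))"
    by (rule lnK) (use assms wpos d_def in \<open>auto simp: field_simps\<close>)
  have eq1: "1 + (e / w) * (- d / e) = p / w" using assms wpos d_def by (simp add: field_simps)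
  have eq2: "ln (w / p) = - ln (p / w)" using assms wpos by (simp add: ln_div)
  have A': "w * ln (w / p) \<le> - e * ln (1 - d / e)"
  proof -
    have "e * ln (1 - d/e) \<le> w * ln (p / w)"
      using mult_left_mono[OF A[unfolded eq1], of w] wpos by (simp add: field_simps)
    then show ?thesis using eq2 by simp
  qed
  have B: "(d / t) * ln (1 + (- t / e)) \<le> ln (1 + (d / t) * (- t / e))"
    by (rule lnK) (use assms d_def in \<open>auto simp: field_simps\<close>)
  have eq3: "1 + (d / t) * (- t / e) = 1 - d / e" using assms by (simp add: field_simps)
  have B': "- e * ln (1 - d / e) \<le> (d / t) * (- e * ln (1 - t / e))"
    using mult_left_mono[OF B[unfolded eq3], of e] assms by (simp add: field_simps)
  show ?thesis using A' B' d_def by simp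
qed

lemma term_neg:
  fixes w p t e :: real
  assumes "e > 0" "w \<ge> e" "p > 0" "p > w" "p - w \<le> t" "t < e" "t > 0"
  shows "w * ln (w / p) \<le> ((p - w) / t) * (- e * ln (1 + t / e))"
proof -
  define d where "d = p - w"
  have wpos: "w > 0" using assms by linarith
  have A: "(e / w) * ln (1 + (d / e)) \<le> ln (1 + (e / w) * (d / e))"
    by (rule lnK) (use assms wpos d_def in \<open>auto simp: field_simps\<close>)
  have eq1: "1 + (e / w) * (d / e) = p / w" using assms wpos d_def by (simp add: field_simps)
  have eq2: "ln (w / p) = - ln (p / w)" using assms wpos by (simp add: ln_div)
  have A': "w * ln (w / p) \<le> - e * ln (1 + d / e)"
  proof -
    have "e * ln (1 + d/e) \<le> w * ln (p / w)"
      using mult_left_mono[OF A[unfolded eq1], of w] wpos by (simp add: field_simps)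
    then show ?thesis using eq2 by simp
  qed
  have B: "(d / t) * ln (1 + (t / e)) \<le> ln (1 + (d / t) * (t / e))"
    by (rule lnK) (use assms d_def in \<open>auto simp: field_simps\<close>)
  have eq3: "1 + (d / t) * (t / e) = 1 + d / e" using assms by (simp add: field_simps)
  have B': "- e * ln (1 + d / e) \<le> (d / t) * (- e * ln (1 + t / e))"
    using mult_left_mono[OF B[unfolded eq3], of e] assms by (simp add: field_simps)
  show ?thesis using A' B' d_def by simp
qed

lemma abs_le_half:
  fixes d :: "'a \<Rightarrow> real"
  assumes "finite A" "a \<in> A" "(\<Sum>b\<in>A. d b) = 0"
  shows "2 * \<bar>d a\<bar> \<le> (\<Sum>b\<in>A. \<bar>d b\<bar>)"
proof -
  have s1: "(\<Sum>b\<in>A. d b) = d a + (\<Sum>b\<in>A-{a}. d b)" using assms by (simp add: sum.remove)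
  have s2: "(\<Sum>b\<in>A. \<bar>d b\<bar>) = \<bar>d a\<bar> + (\<Sum>b\<in>A-{a}. \<bar>d b\<bar>)" using assms by (simp add: sum.remove)
  have "\<bar>\<Sum>b\<in>A-{a}. d b\<bar> \<le> (\<Sum>b\<in>A-{a}. \<bar>d b\<bar>)" by (rule sum_abs)
  then show ?thesis using s1 s2 assms by linarith
qed

theorem mainTheorem15:
  fixes A :: "'a set" and pstar p :: "'a \<Rightarrow> real" and \<epsilon> :: real
  assumes "finite A"
    and "pos_prob_vec A pstar"
    and "\<epsilon> = Min (pstar ` A)"
    and "pos_prob_vec A p"
  shows "l1_dist A pstar p \<ge> 2 * \<epsilon> * sqrt (1 - exp (- KL_div A pstar p / \<epsilon>))"
proof -
  have ps: "\<And>a. a \<in> A \<Longrightarrow> pstar a > 0" "(\<Sum>a\<in>A. pstar a) = 1"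
    using assms(2) by (auto simp: pos_prob_vec_def)
  have pp: "\<And>a. a \<in> A \<Longrightarrow> p a > 0" "(\<Sum>a\<in>A. p a) = 1"
    using assms(4) by (auto simp: pos_prob_vec_def)
  have Ane: "A \<noteq> {}" using ps(2) by auto
  have epos: "\<epsilon> > 0" using assms(1,3) Ane ps(1) by (auto simp: Min_gr_iff)
  have ele: "\<And>a. a \<in> A \<Longrightarrow> \<epsilon> \<le> pstar a" using assms(1,3) by auto
  define d where "d a = pstar a - p a" for a
  define L where "L = l1_dist A pstar p"
  define t where "t = L / 2"
  define D where "D = KL_div A pstar p"
  have sd: "(\<Sum>a\<in>A. d a) = 0" using ps(2) pp(2) by (simp add: d_def sum_subtractf)
  have Ld: "L = (\<Sum>a\<in>A. \<bar>d a\<bar>)" by (simp add: L_def l1_dist_def d_def)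
  have dt: "\<And>a. a \<in> A \<Longrightarrow> \<bar>d a\<bar> \<le> t"
    using abs_le_half[OF assms(1) _ sd] Ld t_def by fastforce
  have sq1: "sqrt (1 - exp (- D / \<epsilon>)) \<le> 1"
    using exp_gt_zero[of "- D / \<epsilon>"] by simp
  consider "t \<ge> \<epsilon>" | "t = 0" | "0 < t" "t < \<epsilon>"
  proof -
    have "(\<Sum>a\<in>A. \<bar>d a\<bar>) \<ge> 0" by (simp add: sum_nonneg)
    then have "t \<ge> 0" using Ld t_def by linarith
    then show "(t \<ge> \<epsilon> \<Longrightarrow> thesis) \<Longrightarrow> (t = 0 \<Longrightarrow> thesis) \<Longrightarrow> (0 < t \<Longrightarrow> t < \<epsilon> \<Longrightarrow> thesis) \<Longrightarrow> thesis" by linarith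
  qed
  then have "2 * \<epsilon> * sqrt (1 - exp (- D / \<epsilon>)) \<le> L"
  proof cases
    case 1
    have "2 * \<epsilon> * sqrt (1 - exp (- D / \<epsilon>)) \<le> 2 * \<epsilon> * 1"
      using sq1 epos by (intro mult_left_mono) auto
    then show ?thesis using 1 t_def by simp
  next
    case 2
    then have "\<And>a. a \<in> A \<Longrightarrow> pstar a = p a" using dt d_def by fastforce
    then have "D = 0" unfolding D_def KL_div_def by (intro sum.neutral) (use pp(1) in fastforce)
    then show ?thesis using Ld by (simp add: sum_nonneg)
  next
    case 3
    define Hp where "Hp = - \<epsilon> * ln (1 - t / \<epsilon>)"
    define Hm where "Hm = - \<epsilon> * ln (1 + t / \<epsilon>)"
    have trm: "pstar a * ln (pstar a / p a) \<le>
        ((\<bar>d a\<bar> + d a) / 2 / t) * Hp + ((\<bar>d a\<bar> - d a) / 2 / t) * Hm" if a: "a \<in> A" for a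
    proof (cases "p a \<le> pstar a")
      case True
      have "pstar a * ln (pstar a / p a) \<le> ((pstar a - p a) / t) * Hp"
        unfolding Hp_def
        by (rule term_pos) (use True a epos ele pp(1) 3 dt[OF a] d_def in auto)
      moreover have "\<bar>d a\<bar> = d a" using True d_def by simp
      then have "((\<bar>d a\<bar> + d a) / 2 / t) * Hp + ((\<bar>d a\<bar> - d a) / 2 / t) * Hm = (d a / t) * Hp"
        by simp
      ultimately show ?thesis unfolding d_def by simp
    next
      case False
      have "pstar a * ln (pstar a / p a) \<le> ((p a - pstar a) / t) * Hm"
        unfolding Hm_def
        by (rule term_neg) (use False a epos ele pp(1) 3 dt[OF a] d_def in auto)
      moreover have "\<bar>d a\<bar> = - d a" using False d_def by simp
      then have "((\<bar>d a\<bar> + d a) / 2 / t) * Hp + ((\<bar>d a\<bar> - d a) / 2 / t) * Hm = (- d a / t) * Hm"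
        by simp
      ultimately show ?thesis unfolding d_def by simp
    qed
    have "D \<le> (\<Sum>a\<in>A. ((\<bar>d a\<bar> + d a) / 2 / t) * Hp + ((\<bar>d a\<bar> - d a) / 2 / t) * Hm)"
      unfolding D_def KL_div_def by (rule sum_mono) (rule trm)
    also have "\<dots> = ((\<Sum>a\<in>A. \<bar>d a\<bar>) + (\<Sum>a\<in>A. d a)) / 2 / t * Hp
        + ((\<Sum>a\<in>A. \<bar>d a\<bar>) - (\<Sum>a\<in>A. d a)) / 2 / t * Hm"
      by (simp add: sum.distrib sum_subtractf flip: sum_distrib_right sum_divide_distrib)
    also have "\<dots> = Hp + Hm" using sd Ld t_def 3 by (simp flip: Ld add: field_simps)
    also have "\<dots> = - \<epsilon> * ln (1 - (t / \<epsilon>)^2)"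
    proof -
      have p1: "1 - t / \<epsilon> > 0" "1 + t / \<epsilon> > 0" using 3 epos by (auto simp: field_simps)
      have "1 - (t / \<epsilon>)^2 = (1 - t / \<epsilon>) * (1 + t / \<epsilon>)" by (simp add: algebra_simps power2_eq_square)
      then have "ln (1 - (t / \<epsilon>)^2) = ln (1 - t / \<epsilon>) + ln (1 + t / \<epsilon>)"
        using p1 by (simp only: ln_mult) (use p1 3 in simp)
      then show ?thesis unfolding Hp_def Hm_def by (simp add: algebra_simps)
    qed
    finally have DL: "D \<le> - \<epsilon> * ln (1 - (t / \<epsilon>)^2)" .
    have q0: "1 - (t / \<epsilon>)^2 > 0"
    proof -
      have "t / \<epsilon> < 1" "t / \<epsilon> > 0" using 3 epos by (auto simp: field_simps)
      then have "(t / \<epsilon>)^2 < 1" by (simp add: power_less_one_iff abs_less_iff)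
      then show ?thesis by simp
    qed
    have "ln (1 - (t / \<epsilon>)^2) \<le> - D / \<epsilon>" using DL epos by (simp add: field_simps)
    then have "1 - (t / \<epsilon>)^2 \<le> exp (- D / \<epsilon>)" using q0 by (metis exp_le_cancel_iff exp_ln)
    then have "sqrt (1 - exp (- D / \<epsilon>)) \<le> sqrt ((t / \<epsilon>)^2)" by (intro real_sqrt_le_mono) linarith
    also have "\<dots> = t / \<epsilon>" using 3 epos by simp
    finally have "2 * \<epsilon> * sqrt (1 - exp (- D / \<epsilon>)) \<le> 2 * \<epsilon> * (t / \<epsilon>)"
      using epos by (intro mult_left_mono) auto
    then show ?thesis using epos t_def by simp
  qed
  then show ?thesis by (simp add: L_def D_def)
qed

end
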